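(* Let $\Omega\subset\mathbb{R}^n$ be a nonempty closed convex set and $f:\mathbb{R}^n\to\mathbb{R}$ differentiable over $\Omega$ such that (i) $f(\bm{x})\ge\underline{f}$ for all $\bm{x}\in\Omega$, (ii) $\|\nabla f(\bm{x})-\nabla f(\bm{y})\|_2\le L\|\bm{x}-\bm{y}\|_2$ for all $\bm{x},\bm{y}\in\Omega$ for some $L>0$, and (iii) the relaxation sequence $\{\omega_k\}\subset[0,\infty)$ satisfies $\sum_{k=0}^\infty\omega_k<\infty$. Suppose $\{\bm{x}_k\}$ is generated by either IGPM without line search or IGPM with line search (described in the context), with $\bm{z}_k$ the inexact projections and $\bm{z}_k^*$ the exact minimizer of $p(\cdot;\bm{x}_k)$. Then \[\lim_{k\to\infty}\Delta p(\bm{z}_k;\bm{x}_k)=0\quad\text{and}\quad\lim_{k\to\infty}\Delta p(\bm{z}_k^*;\bm{x}_k)=0.\]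
   Context: Problem: minimize $f(\bm{x})$ subject to $\bm{x}\in\Omega$. For $\bm{x}_k\in\Omega$ write $\bm{g}_k=\nabla f(\bm{x}_k)$, $\bm{v}_k=\bm{x}_k-\beta\bm{g}_k$ for a fixed $\beta>0$, and define $p(\bm{z};\bm{x}_k)=\tfrac12\|\bm{z}-\bm{v}_k\|_2^2+\delta_\Omega(\bm{z})$ ($\delta_\Omega$ the $0/+\infty$ indicator of $\Omega$), $\bm{z}_k^*=\arg\min_{\bm{z}}p(\bm{z};\bm{x}_k)$ (the Euclidean projection of $\bm{v}_k$ onto $\Omega$), $\Delta p(\bm{z};\bm{x}_k)=p(\bm{x}_k;\bm{x}_k)-p(\bm{z};\bm{x}_k)$, and $q(\bm{u};\bm{x}_k)=-\tfrac12\|\bm{u}-\bm{v}_k\|_2^2-\delta_\Omega^*(\bm{u})+\tfrac12\|\bm{v}_k\|_2^2$ with $\delta^*_\Omega(\bm{u})=\sup_{\bm{x}\in\Omega}\langle\bm{x},\bm{u}\rangle$. An inexact projection at iteration $k$ is a point $\bm{z}_k\in\Omega$ with $\Delta p(\bm{z}_k;\bm{x}_k)\ge0$ together with some dual point $\bm{u}_k$ such that $\frac{p(\bm{x}_k;\bm{x}_k)-p(\bm{z}_k;\bm{x}_k)+\omega_k}{p(\bm{x}_k;\bm{x}_k)-q(\bm{u}_k;\bm{x}_k)+\omega_k}\ge\gamma$, where $0<\gamma<1$. IGPM without line search: $0<\beta\le1/L$, $\bm{x}_0\in\Omega$, and $\bm{x}_{k+1}=\bm{z}_k$ for all $k$.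 IGPM with line search: fix $0<\eta<1$, $0<\alpha\le1$, $\beta>0$, $0<\theta<1$, $\bm{x}_0\in\Omega$; set $\bm{d}_k=\bm{z}_k-\bm{x}_k$, let $\alpha_k$ be the largest value in $\{\theta^i\alpha: i=0,1,2,\dots\}$ with $f(\bm{x}_k+\alpha_k\bm{d}_k)\le f(\bm{x}_k)+\eta\alpha_k\bm{g}_k^T\bm{d}_k$, and set $\bm{x}_{k+1}=\bm{x}_k+\alpha_k\bm{d}_k$. The algorithms are considered as generating infinite sequences. *)

theory Defs
  imports "HOL-Analysis.Analysis"
begin

text \<open>The indicator term of p vanishes at every point used below (all lie in Omega),
  so p is recorded by its quadratic part; zstar is the argmin of p over Omega.\<close>

definition vk :: "('a::euclidean_space \<Rightarrow> 'a) \<Rightarrow> real \<Rightarrow> 'a \<Rightarrow> 'a" where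
  "vk grad \<beta> x = x - \<beta> *\<^sub>R grad x"

definition pp :: "('a::euclidean_space \<Rightarrow> 'a) \<Rightarrow> real \<Rightarrow> 'a \<Rightarrow> 'a \<Rightarrow> real" where
  "pp grad \<beta> x z = (1/2) * (norm (z - vk grad \<beta> x))\<^sup>2"

definition dp :: "('a::euclidean_space \<Rightarrow> 'a) \<Rightarrow> real \<Rightarrow> 'a \<Rightarrow> 'a \<Rightarrow> real" where
  "dp grad \<beta> x z = pp grad \<beta> x x - pp grad \<beta> x z"

definition zstar :: "'a::euclidean_space set \<Rightarrow> ('a \<Rightarrow> 'a) \<Rightarrow> real \<Rightarrow> 'a \<Rightarrow> 'a" where
  "zstar \<Omega> grad \<beta> x = (SOME z. z \<in> \<Omega> \<and> (\<forall>w\<in>\<Omega>. pp grad \<beta> x z \<le> pp grad \<beta> x w))"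

text \<open>Support function of Omega (used only where it is finite).\<close>
definition supp :: "'a::euclidean_space set \<Rightarrow> 'a \<Rightarrow> real" where
  "supp \<Omega> u = Sup ((\<lambda>y. inner y u) ` \<Omega>)"

definition qq :: "'a::euclidean_space set \<Rightarrow> ('a \<Rightarrow> 'a) \<Rightarrow> real \<Rightarrow> 'a \<Rightarrow> 'a \<Rightarrow> real" where
  "qq \<Omega> grad \<beta> x u = - (1/2) * (norm (u - vk grad \<beta> x))\<^sup>2 - supp \<Omega> u
                        + (1/2) * (norm (vk grad \<beta> x))\<^sup>2"

text \<open>Inexact projection: z in Omega, Delta p >= 0, and dual point u with
  (Delta p(z) + omega) / (p(x) - q(u) + omega) >= gamma (cleared of the denominator;
  a u with infinite support value gives q = -infinity and ratio 0 < gamma, hence is excluded).\<close>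
definition inexact_proj ::
  "'a::euclidean_space set \<Rightarrow> ('a \<Rightarrow> 'a) \<Rightarrow> real \<Rightarrow> real \<Rightarrow> real \<Rightarrow> 'a \<Rightarrow> 'a \<Rightarrow> 'a \<Rightarrow> bool" where
  "inexact_proj \<Omega> grad \<beta> \<gamma> \<omega> x z u \<longleftrightarrow>
     z \<in> \<Omega> \<and> dp grad \<beta> x z \<ge> 0 \<and> bdd_above ((\<lambda>y. inner y u) ` \<Omega>) \<and>
     dp grad \<beta> x z + \<omega> \<ge> \<gamma> * (pp grad \<beta> x x - qq \<Omega> grad \<beta> x u + \<omega>)"

definition igpm_no_ls :: "'a::euclidean_space set \<Rightarrow> real \<Rightarrow> real \<Rightarrow> (nat \<Rightarrow> 'a) \<Rightarrow> (nat \<Rightarrow> 'a) \<Rightarrow> bool" where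
  "igpm_no_ls \<Omega> L \<beta> x z \<longleftrightarrow> 0 < \<beta> \<and> \<beta> \<le> 1 / L \<and> x 0 \<in> \<Omega> \<and> (\<forall>k. x (Suc k) = z k)"

definition armijo :: "('a::euclidean_space \<Rightarrow> real) \<Rightarrow> ('a \<Rightarrow> 'a) \<Rightarrow> real \<Rightarrow> 'a \<Rightarrow> 'a \<Rightarrow> real \<Rightarrow> bool" where
  "armijo f grad \<eta> x d a \<longleftrightarrow> f (x + a *\<^sub>R d) \<le> f x + \<eta> * a * inner (grad x) d"

definition igpm_ls ::
  "'a::euclidean_space set \<Rightarrow> ('a \<Rightarrow> real) \<Rightarrow> ('a \<Rightarrow> 'a) \<Rightarrow> real \<Rightarrow> real \<Rightarrow> real \<Rightarrow> real
     \<Rightarrow> (nat \<Rightarrow> 'a) \<Rightarrow> (nat \<Rightarrow> 'a) \<Rightarrow> bool" where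
  "igpm_ls \<Omega> f grad \<beta> \<eta> \<alpha> \<theta> x z \<longleftrightarrow>
     0 < \<eta> \<and> \<eta> < 1 \<and> 0 < \<alpha> \<and> \<alpha> \<le> 1 \<and> 0 < \<beta> \<and> 0 < \<theta> \<and> \<theta> < 1 \<and> x 0 \<in> \<Omega> \<and>
     (\<forall>k. \<exists>i. armijo f grad \<eta> (x k) (z k - x k) (\<theta> ^ i * \<alpha>)
              \<and> (\<forall>j<i. \<not> armijo f grad \<eta> (x k) (z k - x k) (\<theta> ^ j * \<alpha>))
              \<and> x (Suc k) = x k + (\<theta> ^ i * \<alpha>) *\<^sub>R (z k - x k))"

end

theory Submission
  imports Defs
begin

lemma dp_eq: "dp grad \<beta> x z = - \<beta> * inner (grad x) (z - x) - (1/2) * (norm (z - x))\<^sup>2"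
  unfolding dp_def pp_def vk_def power2_norm_eq_inner
  by (simp add: inner_diff_left inner_diff_right inner_commute algebra_simps)

lemma weak_dual:
  assumes "z \<in> \<Omega>" "bdd_above ((\<lambda>y. inner y u) ` \<Omega>)"
  shows "qq \<Omega> grad \<beta> x u \<le> pp grad \<beta> x z"
proof -
  have s: "inner z u \<le> supp \<Omega> u" unfolding supp_def using assms by (intro cSUP_upper) auto
  define v where "v = vk grad \<beta> x"
  have "(1/2) * (norm (z - v))\<^sup>2 + (1/2) * (norm (u - v))\<^sup>2 - (1/2) * (norm v)\<^sup>2 + inner z u
     = (1/2) * (norm (z + u - v))\<^sup>2"
    by (simp add: power2_norm_eq_inner inner_simps algebra_simps inner_commute)
  moreover have "0 \<le> (1/2) * (norm (z + u - v))\<^sup>2" by simp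
  ultimately show ?thesis using s unfolding qq_def pp_def v_def[symmetric] by linarith
qed

lemma descent:
  fixes f :: "'a::euclidean_space \<Rightarrow> real"
  assumes cvx: "convex \<Omega>" and x: "x \<in> \<Omega>" and xd: "x + d \<in> \<Omega>"
    and der: "\<forall>y\<in>\<Omega>. (f has_derivative (\<lambda>h. inner (grad y) h)) (at y)"
    and lip: "\<forall>y\<in>\<Omega>. \<forall>w\<in>\<Omega>. norm (grad y - grad w) \<le> L * norm (y - w)"
  shows "f (x + d) \<le> f x + inner (grad x) d + L/2 * (norm d)\<^sup>2"
proof -
  define \<phi> where "\<phi> t = f (x + t *\<^sub>R d) - t * inner (grad x) d - L/2 * t\<^sup>2 * (norm d)\<^sup>2" for t
  have mem: "x + t *\<^sub>R d \<in> \<Omega>" if "0 \<le> t" "t \<le> 1" for t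
  proof -
    have "(1 - t) *\<^sub>R x + t *\<^sub>R (x + d) \<in> \<Omega>" using cvx x xd that by (intro convexD) auto
    moreover have "(1 - t) *\<^sub>R x + t *\<^sub>R (x + d) = x + t *\<^sub>R d" by (simp add: algebra_simps)
    ultimately show ?thesis by simp
  qed
  have "\<phi> 1 \<le> \<phi> 0"
  proof (rule DERIV_nonpos_imp_nonincreasing[of 0 1 \<phi>])
    fix t :: real assume t: "0 \<le> t" "t \<le> 1"
    have d1: "((\<lambda>t. x + t *\<^sub>R d) has_derivative (\<lambda>h. h *\<^sub>R d)) (at t)"
      by (auto intro!: derivative_eq_intros)
    have d2: "(f has_derivative (\<lambda>h. inner (grad (x + t *\<^sub>R d)) h)) (at (x + t *\<^sub>R d))"
      using der mem[OF t] by blast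
    have "((f \<circ> (\<lambda>t. x + t *\<^sub>R d)) has_derivative ((\<lambda>h. inner (grad (x + t *\<^sub>R d)) h) \<circ> (\<lambda>h. h *\<^sub>R d))) (at t)"
      by (rule diff_chain_at[OF d1 d2])
    moreover have "((\<lambda>h. inner (grad (x + t *\<^sub>R d)) h) \<circ> (\<lambda>h. h *\<^sub>R d)) = (*) (inner (grad (x + t *\<^sub>R d)) d)"
      by (auto simp: fun_eq_iff)
    ultimately have "((\<lambda>t. f (x + t *\<^sub>R d)) has_real_derivative inner (grad (x + t *\<^sub>R d)) d) (at t)"
      by (simp add: has_field_derivative_def o_def)
    then have D: "(\<phi> has_real_derivative (inner (grad (x + t *\<^sub>R d)) d - inner (grad x) d - L/2 * (2 * t) * (norm d)\<^sup>2)) (at t)"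
      unfolding \<phi>_def by (auto intro!: derivative_eq_intros)
    have "inner (grad (x + t *\<^sub>R d)) d - inner (grad x) d = inner (grad (x + t *\<^sub>R d) - grad x) d"
      by (simp add: inner_diff_left)
    also have "\<dots> \<le> norm (grad (x + t *\<^sub>R d) - grad x) * norm d" by (rule norm_cauchy_schwarz)
    also have "\<dots> \<le> L * norm (t *\<^sub>R d) * norm d"
    proof (intro mult_right_mono)
      have "norm (grad (x + t *\<^sub>R d) - grad x) \<le> L * norm ((x + t *\<^sub>R d) - x)"
        using lip mem[OF t] x by blast
      then show "norm (grad (x + t *\<^sub>R d) - grad x) \<le> L * norm (t *\<^sub>R d)" by simp
    qed simp
    also have "\<dots> = L * t * (norm d)\<^sup>2" using t by (simp add: power2_eq_square)
    finally show "\<exists>y. (\<phi> has_real_derivative y) (at t) \<and> y \<le> 0"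
      using D by (intro exI[of _ "inner (grad (x + t *\<^sub>R d)) d - inner (grad x) d - L/2 * (2 * t) * (norm d)\<^sup>2"]) auto
  qed simp
  then show ?thesis unfolding \<phi>_def by simp
qed

theorem lemma3p3:
  fixes \<Omega> :: "'a::euclidean_space set" and f :: "'a \<Rightarrow> real" and grad :: "'a \<Rightarrow> 'a"
    and flow L \<beta> \<gamma> \<eta> \<alpha> \<theta> :: real and \<omega> :: "nat \<Rightarrow> real" and x z u :: "nat \<Rightarrow> 'a"
  assumes "\<Omega> \<noteq> {}" and "closed \<Omega>" and "convex \<Omega>"
    and "\<forall>y\<in>\<Omega>. (f has_derivative (\<lambda>h. inner (grad y) h)) (at y)"
    and "\<forall>y\<in>\<Omega>. f y \<ge> flow"
    and "L > 0" and "\<forall>y\<in>\<Omega>. \<forall>w\<in>\<Omega>. norm (grad y - grad w) \<le> L * norm (y - w)"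
    and "\<forall>k. \<omega> k \<ge> 0" and "summable \<omega>"
    and "0 < \<gamma>" and "\<gamma> < 1"
    and "\<forall>k. inexact_proj \<Omega> grad \<beta> \<gamma> (\<omega> k) (x k) (z k) (u k)"
    and "igpm_no_ls \<Omega> L \<beta> x z \<or> igpm_ls \<Omega> f grad \<beta> \<eta> \<alpha> \<theta> x z"
  shows "(\<lambda>k. dp grad \<beta> (x k) (z k)) \<longlonglongrightarrow> 0 \<and>
         (\<lambda>k. dp grad \<beta> (x k) (zstar \<Omega> grad \<beta> (x k))) \<longlonglongrightarrow> 0"
proof -
  note ne = assms(1) and cl = assms(2) and cvx = assms(3) and der = assms(4) and low = assms(5)
    and Lpos = assms(6) and lip = assms(7) and om = assms(8) and oms = assms(9)
    and gam = assms(10,11) and ip = assms(12) and alg = assms(13)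
  define D where "D k = dp grad \<beta> (x k) (z k)" for k
  have zin: "z k \<in> \<Omega>" and D0: "0 \<le> D k" for k
    using ip unfolding inexact_proj_def D_def by auto
  have bpos: "0 < \<beta>" using alg unfolding igpm_no_ls_def igpm_ls_def by auto
  have Deq: "D k = - \<beta> * inner (grad (x k)) (z k - x k) - (1/2) * (norm (z k - x k))\<^sup>2" for k
    unfolding D_def by (rule dp_eq)
  have xin: "x k \<in> \<Omega>" for k
  proof (induction k)
    case 0 then show ?case using alg unfolding igpm_no_ls_def igpm_ls_def by auto
  next
    case (Suc k)
    show ?case
    proof (cases "igpm_no_ls \<Omega> L \<beta> x z")
      case True then show ?thesis using zin unfolding igpm_no_ls_def by auto
    next
      case False
      then have ls: "igpm_ls \<Omega> f grad \<beta> \<eta> \<alpha> \<theta> x z" using alg by auto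
      then obtain i where xs: "x (Suc k) = x k + (\<theta> ^ i * \<alpha>) *\<^sub>R (z k - x k)"
        unfolding igpm_ls_def by blast
      have th: "0 < \<theta>" "\<theta> < 1" "0 < \<alpha>" "\<alpha> \<le> 1" using ls unfolding igpm_ls_def by auto
      define a where "a = \<theta> ^ i * \<alpha>"
      have a0: "0 \<le> a" using th unfolding a_def by simp
      have "\<theta> ^ i \<le> 1" using th by (simp add: power_le_one)
      then have a1: "a \<le> 1" using th unfolding a_def by (meson less_eq_real_def mult_le_one zero_le_power)
      have "(1 - a) *\<^sub>R x k + a *\<^sub>R z k \<in> \<Omega>" using cvx Suc zin a0 a1 by (intro convexD) auto
      moreover have "(1 - a) *\<^sub>R x k + a *\<^sub>R z k = x (Suc k)" unfolding xs a_def[symmetric]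
        by (simp add: algebra_simps)
      ultimately show ?thesis by simp
    qed
  qed
  have key: "\<exists>c>0. \<forall>k. f (x (Suc k)) \<le> f (x k) - c * D k"
  proof (cases "igpm_no_ls \<Omega> L \<beta> x z")
    case True
    have bL: "\<beta> * L \<le> 1" using True Lpos unfolding igpm_no_ls_def by (simp add: le_divide_eq)
    have "f (x (Suc k)) \<le> f (x k) - (1/\<beta>) * D k" for k
    proof -
      define d where "d = z k - x k"
      define G where "G = inner (grad (x k)) d"
      define N where "N = (norm d)\<^sup>2"
      have xs: "x (Suc k) = x k + d" using True unfolding igpm_no_ls_def d_def by simp
      have desc: "f (x (Suc k)) \<le> f (x k) + G + L/2 * N"
        unfolding xs G_def N_def by (rule descent[OF cvx xin _ der lip]) (simp add: d_def zin)
      have DG: "D k = - \<beta> * G - N/2" unfolding Deq G_def N_def d_def by simp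
      have N0: "0 \<le> N" unfolding N_def by simp
      have "\<beta> * f (x (Suc k)) \<le> \<beta> * (f (x k) + G + L/2 * N)" using desc bpos by simp
      also have "\<dots> = \<beta> * f (x k) - D k - N/2 + (\<beta> * L) * N / 2" unfolding DG by (simp add: algebra_simps)
      also have "\<dots> \<le> \<beta> * f (x k) - D k" using mult_right_mono[OF bL N0] by simp
      finally show ?thesis using bpos by (simp add: field_simps)
    qed
    then show ?thesis using bpos by (intro exI[of _ "1/\<beta>"]) auto
  next
    case False
    then have ls: "igpm_ls \<Omega> f grad \<beta> \<eta> \<alpha> \<theta> x z" using alg by auto
    have th: "0 < \<theta>" "\<theta> < 1" "0 < \<alpha>" "\<alpha> \<le> 1" "0 < \<eta>" "\<eta> < 1"
      using ls unfolding igpm_ls_def by auto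
    define c0 where "c0 = min \<alpha> (\<theta> * (1 - \<eta>) / (\<beta> * L))"
    have c0pos: "0 < c0" unfolding c0_def using th bpos Lpos by simp
    have "f (x (Suc k)) \<le> f (x k) - (\<eta> * c0 / \<beta>) * D k" for k
    proof -
      define d where "d = z k - x k"
      define G where "G = inner (grad (x k)) d"
      define N where "N = (norm d)\<^sup>2"
      have DG: "D k = - \<beta> * G - N/2" unfolding Deq G_def N_def d_def by simp
      have N0: "0 \<le> N" unfolding N_def by simp
      obtain i where arm: "armijo f grad \<eta> (x k) d (\<theta> ^ i * \<alpha>)"
        and narm: "\<forall>j<i. \<not> armijo f grad \<eta> (x k) d (\<theta> ^ j * \<alpha>)"
        and xs: "x (Suc k) = x k + (\<theta> ^ i * \<alpha>) *\<^sub>R d"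
        using ls unfolding igpm_ls_def d_def by blast
      define a where "a = \<theta> ^ i * \<alpha>"
      have apos: "0 < a" using th unfolding a_def by simp
      have arm': "f (x (Suc k)) \<le> f (x k) + \<eta> * a * G"
        using arm unfolding armijo_def xs a_def G_def by simp
      have cases: "D k = 0 \<or> c0 \<le> a"
      proof (cases i)
        case 0 then show ?thesis unfolding a_def c0_def by simp
      next
        case (Suc j)
        define s where "s = \<theta> ^ j * \<alpha>"
        have as: "a = \<theta> * s" unfolding a_def s_def Suc by simp
        have spos: "0 < s" using th unfolding s_def by simp
        have "\<theta> ^ j \<le> 1" using th by (simp add: power_le_one)
        then have s1: "s \<le> 1" using th unfolding s_def by (meson less_eq_real_def mult_le_one zero_le_power)
        have na: "f (x k + s *\<^sub>R d) > f (x k) + \<eta> * s * G"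
          using narm Suc unfolding armijo_def s_def G_def by auto
        have inS: "x k + s *\<^sub>R d \<in> \<Omega>"
        proof -
          have "(1 - s) *\<^sub>R x k + s *\<^sub>R z k \<in> \<Omega>" using cvx xin zin spos s1 by (intro convexD) auto
          moreover have "(1 - s) *\<^sub>R x k + s *\<^sub>R z k = x k + s *\<^sub>R d" unfolding d_def
            by (simp add: algebra_simps)
          ultimately show ?thesis by simp
        qed
        have ds: "f (x k + s *\<^sub>R d) \<le> f (x k) + s * G + L/2 * (s\<^sup>2 * N)"
          using descent[OF cvx xin inS der lip] spos unfolding G_def N_def
          by (simp add: power_mult_distrib)
        have "\<eta> * s * G < s * G + L/2 * (s\<^sup>2 * N)" using na ds by simp
        then have "s * ((\<eta> - 1) * G) < s * (L/2 * s * N)" by (simp add: algebra_simps power2_eq_square)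
        then have e1: "(\<eta> - 1) * G < L/2 * s * N" using spos by simp
        show ?thesis
        proof (cases "N = 0")
          case True
          then have "d = 0" unfolding N_def by simp
          then have "D k = 0" using DG True unfolding G_def by simp
          then show ?thesis by simp
        next
          case False
          then have Npos: "0 < N" using N0 by simp
          have "(1 - \<eta>) * (N/2) \<le> (1 - \<eta>) * (- \<beta> * G)"
            using DG D0[of k] th by (intro mult_left_mono) auto
          also have "\<dots> = \<beta> * ((\<eta> - 1) * G)" by (simp add: algebra_simps)
          also have "\<dots> < \<beta> * (L/2 * s * N)" using e1 bpos by simp
          finally have "(1 - \<eta>) * N < (\<beta> * L * s) * N" by (simp add: algebra_simps)
          then have "1 - \<eta> < \<beta> * L * s" using Npos by simp
          then have "(1 - \<eta>) / (\<beta> * L) < s" using bpos Lpos by (simp add: divide_less_eq mult.commute mult.left_commute)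
          then have "\<theta> * ((1 - \<eta>) / (\<beta> * L)) \<le> \<theta> * s" using th by (intro mult_left_mono) auto
          then have "\<theta> * ((1 - \<eta>) / (\<beta> * L)) \<le> a" unfolding as .
          then show ?thesis unfolding c0_def by (simp add: min_le_iff_disj)
        qed
      qed
      have "\<beta> * G \<le> - D k" using DG N0 by simp
      then have "G \<le> - D k / \<beta>" using bpos by (simp add: field_simps)
      then have "\<eta> * a * G \<le> \<eta> * a * (- D k / \<beta>)" using th apos by (intro mult_left_mono) auto
      also have "\<dots> \<le> - (\<eta> * c0 / \<beta>) * D k"
      proof (cases "D k = 0")
        case True then show ?thesis by simp
      next
        case False
        then have "c0 \<le> a" using cases by simp
        then have "\<eta> * c0 * D k \<le> \<eta> * a * D k" using th D0[of k] by (intro mult_right_mono mult_left_mono) auto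
        then show ?thesis using bpos by (simp add: divide_simps)
      qed
      finally show ?thesis using arm' by simp
    qed
    then show ?thesis using th c0pos bpos by (intro exI[of _ "\<eta> * c0 / \<beta>"]) auto
  qed
  then obtain c where cpos: "0 < c" and dec: "\<And>k. f (x (Suc k)) \<le> f (x k) - c * D k" by blast
  have sumb: "c * (\<Sum>k<n. D k) \<le> f (x 0) - f (x n)" for n
  proof (induction n)
    case (Suc n) then show ?case using dec[of n] by (simp add: algebra_simps)
  qed simp
  have "(\<Sum>k<n. D k) \<le> (f (x 0) - flow) / c" for n
  proof -
    have "c * (\<Sum>k<n. D k) \<le> f (x 0) - flow" using sumb[of n] low xin[of n] by fastforce
    then show ?thesis using cpos by (simp add: le_divide_eq mult.commute)
  qed
  then have "summable D" using D0 by (intro summableI_nonneg_bounded) auto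
  then have Dlim: "D \<longlonglongrightarrow> 0" by (rule summable_LIMSEQ_zero)
  have omlim: "\<omega> \<longlonglongrightarrow> 0" using oms by (rule summable_LIMSEQ_zero)
  define Ds where "Ds k = dp grad \<beta> (x k) (zstar \<Omega> grad \<beta> (x k))" for k
  have zs: "zstar \<Omega> grad \<beta> y \<in> \<Omega> \<and> (\<forall>w\<in>\<Omega>. pp grad \<beta> y (zstar \<Omega> grad \<beta> y) \<le> pp grad \<beta> y w)" for y
  proof -
    define v where "v = vk grad \<beta> y"
    define c where "c = closest_point \<Omega> v"
    have "c \<in> \<Omega>" unfolding c_def using cl ne by (rule closest_point_in_set)
    moreover have "pp grad \<beta> y c \<le> pp grad \<beta> y w" if "w \<in> \<Omega>" for w
    proof -
      have "dist v c \<le> dist v w" unfolding c_def using cl that by (rule closest_point_le)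
      then have "(dist v c)\<^sup>2 \<le> (dist v w)\<^sup>2" by (simp add: power_mono)
      then show ?thesis unfolding pp_def v_def[symmetric] by (simp add: dist_norm norm_minus_commute)
    qed
    ultimately have "\<exists>z. z \<in> \<Omega> \<and> (\<forall>w\<in>\<Omega>. pp grad \<beta> y z \<le> pp grad \<beta> y w)" by blast
    then show ?thesis unfolding zstar_def by (rule someI_ex)
  qed
  have Ds0: "0 \<le> Ds k" for k using zs[of "x k"] xin[of k] unfolding Ds_def dp_def by auto
  have Dsle: "Ds k \<le> (D k + \<omega> k) / \<gamma>" for k
  proof -
    have i: "D k + \<omega> k \<ge> \<gamma> * (pp grad \<beta> (x k) (x k) - qq \<Omega> grad \<beta> (x k) (u k) + \<omega> k)"
      and bdd: "bdd_above ((\<lambda>y. inner y (u k)) ` \<Omega>)"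
      using ip unfolding inexact_proj_def D_def by auto
    have "qq \<Omega> grad \<beta> (x k) (u k) \<le> pp grad \<beta> (x k) (zstar \<Omega> grad \<beta> (x k))"
      using zs[of "x k"] bdd by (intro weak_dual) auto
    then have "Ds k + \<omega> k \<le> pp grad \<beta> (x k) (x k) - qq \<Omega> grad \<beta> (x k) (u k) + \<omega> k"
      unfolding Ds_def dp_def by simp
    then have "\<gamma> * (Ds k + \<omega> k) \<le> D k + \<omega> k" using i gam by (meson mult_left_mono less_imp_le order_trans)
    then have "\<gamma> * Ds k \<le> D k + \<omega> k" using gam om by (smt (verit) mult_nonneg_nonneg distrib_left)
    then show ?thesis using gam by (simp add: le_divide_eq mult.commute)
  qed
  have "(\<lambda>k. (D k + \<omega> k) / \<gamma>) \<longlonglongrightarrow> (0 + 0) / \<gamma>"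
    by (intro tendsto_intros Dlim omlim) (use gam in simp)
  then have "(\<lambda>k. (D k + \<omega> k) / \<gamma>) \<longlonglongrightarrow> 0" by simp
  then have "Ds \<longlonglongrightarrow> 0"
    by (rule tendsto_sandwich[rotated 2, OF tendsto_const]) (use Ds0 Dsle in auto)
  then show ?thesis using Dlim unfolding D_def Ds_def by simp
qed

end
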